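(* Let $p\in\mathbb{R}_{\ge0}^n$ and $w\in\mathbb{R}_{\ge0}^n$ be arbitrary and let $t\ge0$. Then either $\Lambda(t)=\infty$ or there exists an index $i\in\{1,\ldots,n\}$ such that $\Lambda(t)=\Lambda^i(t)$.
   Context: Let $x^\star$ be a solution maximizing $p^{\mathsf T}x$ over $\{x\in\{0,1\}^n: w^{\mathsf T}x\le t\}$ (the winner), and let $\hat{x}$ be a solution minimizing $w^{\mathsf T}x$ over $\{x\in\{0,1\}^n: p^{\mathsf T}x>p^{\mathsf T}x^\star\}$ (the loser of smallest weight), with $\hat{x}=\perp$ if this set is empty. Define $\Lambda(t)=w^{\mathsf T}\hat{x}-t$ if $\hat{x}\ne\perp$ and $\Lambda(t)=\infty$ otherwise. For $i\in\{1,\ldots,n\}$ and $j\in\{0,1\}$ let $\mathcal{S}^{x_i=j}=\{x\in\{0,1\}^n: x_i=j\}$; let $x^{\star,i}$ maximize $p^{\mathsf T}x$ over $\{x\in\mathcal{S}^{x_i=0}: w^{\mathsf T}x\le t\}$, and let $\hat{x}^i$ minimize $w^{\mathsf T}x$ over $\{x\in\mathcal{S}^{x_i=1}: p^{\mathsf T}x>p^{\mathsf T}x^{\star,i}\}$, with $\hat{x}^i=\perp$ if this set is empty. Define $\Lambda^i(t)=w^{\mathsf T}\hat{x}^i-t$ if $\hat{x}^i\ne\perp$ and $\Lambda^i(t)=\infty$ otherwise. (These values do not depend on how ties in the argmax/argmin are broken.) *)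

theory Defs
  imports "HOL-Analysis.Analysis" "HOL-Library.Extended_Real"
begin

text \<open>Vectors in R^n are modelled as functions nat => real; only indices 0..n-1 matter.
  The binary cube {0,1}^n is modelled as functions that are 0 or 1 on {0..<n} and 0 elsewhere.\<close>

definition binvecs :: "nat \<Rightarrow> (nat \<Rightarrow> real) set" where
  "binvecs n = {x. (\<forall>i<n. x i = 0 \<or> x i = 1) \<and> (\<forall>i\<ge>n. x i = 0)}"

definition dotp :: "nat \<Rightarrow> (nat \<Rightarrow> real) \<Rightarrow> (nat \<Rightarrow> real) \<Rightarrow> real" where
  "dotp n a x = (\<Sum>i<n. a i * x i)"

text \<open>The feasible winner set is always nonempty (contains 0, as t >= 0, and 0 is in S^{x_i=0}).\<close>

definition LambdaGen ::
  "nat \<Rightarrow> (nat \<Rightarrow> real) \<Rightarrow> (nat \<Rightarrow> real) \<Rightarrow> real \<Rightarrow> (nat \<Rightarrow> real) set \<Rightarrow> (nat \<Rightarrow> real) set \<Rightarrow> ereal" where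
  "LambdaGen n p w t S0 S1 =
     (let xstar = (ARG_MAX (dotp n p) x. x \<in> S0 \<and> dotp n w x \<le> t);
          L = {x \<in> S1. dotp n p x > dotp n p xstar}
      in if L = {} then \<infinity>
         else ereal (dotp n w (ARG_MIN (dotp n w) x. x \<in> L) - t))"

definition Lambda :: "nat \<Rightarrow> (nat \<Rightarrow> real) \<Rightarrow> (nat \<Rightarrow> real) \<Rightarrow> real \<Rightarrow> ereal" where
  "Lambda n p w t = LambdaGen n p w t (binvecs n) (binvecs n)"

definition Lambda_i :: "nat \<Rightarrow> (nat \<Rightarrow> real) \<Rightarrow> (nat \<Rightarrow> real) \<Rightarrow> real \<Rightarrow> nat \<Rightarrow> ereal" where
  "Lambda_i n p w t i = LambdaGen n p w t {x \<in> binvecs n. x i = 0} {x \<in> binvecs n. x i = 1}"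

end

theory Submission
  imports Defs
begin

lemma argmax_fin:
  fixes f :: "'a \<Rightarrow> 'b::linorder"
  assumes "finite {x. P x}" "P a"
  shows "P (arg_max f P) \<and> (\<forall>y. P y \<longrightarrow> f y \<le> f (arg_max f P))"
proof -
  have "Max (f ` {x. P x}) \<in> f ` {x. P x}" using assms by (intro Max_in) auto
  then obtain x where x: "P x" "f x = Max (f ` {x. P x})" by auto
  have "\<forall>y. P y \<longrightarrow> f y \<le> f x" using x(2) assms(1) by simp
  then have "is_arg_max f P x" using x(1) by (simp add: is_arg_max_linorder)
  then have "is_arg_max f P (arg_max f P)" unfolding arg_max_def by (rule someI)
  then show ?thesis by (simp add: is_arg_max_linorder)
qed

lemma argmin_fin:
  fixes f :: "'a \<Rightarrow> 'b::linorder"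
  assumes "finite {x. P x}" "P a"
  shows "P (arg_min f P) \<and> (\<forall>y. P y \<longrightarrow> f (arg_min f P) \<le> f y)"
proof -
  obtain x where "is_arg_min f (\<lambda>x. x \<in> {x. P x}) x"
    using ex_is_arg_min_if_finite[OF assms(1), of f] assms(2) by blast
  then have "is_arg_min f P x" by simp
  then have "is_arg_min f P (arg_min f P)" unfolding arg_min_def by (rule someI)
  then show ?thesis by (simp add: is_arg_min_linorder)
qed

lemma finite_binvecs: "finite (binvecs n)"
proof -
  have "binvecs n \<subseteq> (\<lambda>S i. if i \<in> S then 1 else 0) ` Pow {..<n}"
  proof
    fix x assume x: "x \<in> binvecs n"
    have "x = (\<lambda>i. if i \<in> {i. i < n \<and> x i = 1} then 1 else 0)"
    proof (rule ext)
      fix i show "x i = (if i \<in> {i. i < n \<and> x i = 1} then 1 else 0)"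
        using x unfolding binvecs_def by (cases "i < n") auto
    qed
    then show "x \<in> (\<lambda>S i. if i \<in> S then 1 else 0) ` Pow {..<n}" by blast
  qed
  then show ?thesis by (rule finite_subset) simp
qed

theorem lemma2p6:
  fixes n :: nat and p w :: "nat \<Rightarrow> real" and t :: real
  assumes "\<forall>i<n. p i \<ge> 0" and "\<forall>i<n. w i \<ge> 0" and "t \<ge> 0"
  shows "Lambda n p w t = \<infinity> \<or> (\<exists>i<n. Lambda n p w t = Lambda_i n p w t i)"
proof -
  define B where "B = binvecs n"
  have finB: "finite B" using finite_binvecs B_def by simp
  have zB: "(\<lambda>_. 0) \<in> B" unfolding B_def binvecs_def by simp
  have zw: "dotp n w (\<lambda>_. 0) \<le> t" using assms(3) by (simp add: dotp_def)
  define xs where "xs = (ARG_MAX (dotp n p) x. x \<in> B \<and> dotp n w x \<le> t)"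
  have xs: "xs \<in> B \<and> dotp n w xs \<le> t \<and> (\<forall>y. y \<in> B \<and> dotp n w y \<le> t \<longrightarrow> dotp n p y \<le> dotp n p xs)"
    unfolding xs_def
    using argmax_fin[of "\<lambda>x. x \<in> B \<and> dotp n w x \<le> t" "\<lambda>_. 0" "dotp n p"] finB zB zw
    by simp
  define L where "L = {x \<in> B. dotp n p x > dotp n p xs}"
  show ?thesis
  proof (cases "L = {}")
    case True
    then show ?thesis unfolding Lambda_def LambdaGen_def Let_def B_def[symmetric]
      xs_def[symmetric] L_def[symmetric] by simp
  next
    case False
    then obtain a where aL: "a \<in> L" by blast
    define xh where "xh = (ARG_MIN (dotp n w) x. x \<in> L)"
    have xh: "xh \<in> L \<and> (\<forall>y. y \<in> L \<longrightarrow> dotp n w xh \<le> dotp n w y)"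
      unfolding xh_def using argmin_fin[of "\<lambda>x. x \<in> L" a "dotp n w"] aL finB L_def
      by auto
    have LamE: "Lambda n p w t = ereal (dotp n w xh - t)"
      unfolding Lambda_def LambdaGen_def Let_def B_def[symmetric]
      xs_def[symmetric] L_def[symmetric] xh_def[symmetric] using False by simp
    have "\<exists>i<n. xh i = 1 \<and> xs i = 0"
    proof (rule ccontr)
      assume "\<not> ?thesis"
      then have "\<forall>i<n. xh i \<le> xs i"
        using xh xs unfolding L_def B_def binvecs_def by fastforce
      then have "dotp n p xh \<le> dotp n p xs"
        unfolding dotp_def using assms(1) by (intro sum_mono mult_left_mono) auto
      then show False using xh L_def by auto
    qed
    then obtain i where i: "i < n" "xh i = 1" "xs i = 0" by blast
    define B0 where "B0 = {x \<in> binvecs n. x i = 0}"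
    define B1 where "B1 = {x \<in> binvecs n. x i = 1}"
    define xs' where "xs' = (ARG_MAX (dotp n p) x. x \<in> B0 \<and> dotp n w x \<le> t)"
    have fin0: "finite {x. x \<in> B0 \<and> dotp n w x \<le> t}"
      by (rule finite_subset[OF _ finite_binvecs[of n]]) (auto simp: B0_def)
    have xsB0: "xs \<in> B0 \<and> dotp n w xs \<le> t"
      using xs i(3) unfolding B0_def B_def by blast
    have xs': "xs' \<in> B0 \<and> dotp n w xs' \<le> t \<and> (\<forall>y. y \<in> B0 \<and> dotp n w y \<le> t \<longrightarrow> dotp n p y \<le> dotp n p xs')"
      unfolding xs'_def
      using argmax_fin[where P="\<lambda>x. x \<in> B0 \<and> dotp n w x \<le> t" and f="dotp n p", OF fin0 xsB0]
      by blast
    have B0B: "B0 \<subseteq> B" unfolding B0_def B_def by blast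
    have pe1: "dotp n p xs \<le> dotp n p xs'" using xs' xsB0 by blast
    have pe2: "dotp n p xs' \<le> dotp n p xs" using xs' xs B0B by blast
    have peq: "dotp n p xs' = dotp n p xs" using pe1 pe2 by linarith
    define L' where "L' = {x \<in> B1. dotp n p x > dotp n p xs'}"
    have L'L: "L' \<subseteq> L" unfolding L'_def L_def B1_def B_def using peq by auto
    have xhL': "xh \<in> L'" unfolding L'_def B1_def using xh i peq unfolding L_def B_def by auto
    define xh' where "xh' = (ARG_MIN (dotp n w) x. x \<in> L')"
    have finL': "finite {x. x \<in> L'}"
      using finite_subset[OF L'L] finite_subset[OF _ finB, of L] unfolding L_def by auto
    have xh': "xh' \<in> L' \<and> (\<forall>y. y \<in> L' \<longrightarrow> dotp n w xh' \<le> dotp n w y)"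
      unfolding xh'_def
      using argmin_fin[where P="\<lambda>x. x \<in> L'" and f="dotp n w", OF finL' xhL'] by blast
    have we1: "dotp n w xh' \<le> dotp n w xh" using xh' xhL' by blast
    have we2: "dotp n w xh \<le> dotp n w xh'" using xh' xh L'L by blast
    have weq: "dotp n w xh' = dotp n w xh" using we1 we2 by linarith
    have "Lambda_i n p w t i = ereal (dotp n w xh' - t)"
      unfolding Lambda_i_def LambdaGen_def Let_def B0_def[symmetric] B1_def[symmetric]
        xs'_def[symmetric] L'_def[symmetric] xh'_def[symmetric] using xhL' by auto
    then show ?thesis using LamE weq i(1) by auto
  qed
qed

end
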